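(* Let $k\in\mathbb{R}$ and $\epsilon\in(0,1)$. There exists a polynomial $p_{\mathrm{gauss},k,n}$ of degree $$n=\left\lceil\sqrt{8\left\lceil\max\{\ln(2/\epsilon),\,k^2e^2/2\}\right\rceil\ln(4/\epsilon)}\right\rceil$$ such that $\max_{x\in[-1,1]}\left|p_{\mathrm{gauss},k,n}(x)-e^{-(kx)^2}\right|\le\epsilon$. *)

theory Defs
  imports Complex_Main "HOL-Computational_Algebra.Polynomial"
begin

end

theory Submission
  imports Defs
begin

fun cheb :: "nat \<Rightarrow> real poly" where
  "cheb 0 = 1"
| "cheb (Suc 0) = [:0, 1:]"
| "cheb (Suc (Suc n)) = [:0, 2:] * cheb (Suc n) - cheb n"

lemma cheb_cos: "poly (cheb n) (cos t) = cos (real n * t)"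
proof (induction n rule: cheb.induct)
  case (3 n)
  define a where "a = real (Suc n) * t"
  have a: "real (Suc (Suc n)) * t = a + t" "real n * t = a - t"
    by (simp_all add: a_def algebra_simps)
  have e: "cos (a + t) = 2 * cos t * cos a - cos (a - t)"
    by (simp add: cos_add cos_diff)
  have "poly (cheb (Suc (Suc n))) (cos t) = 2 * cos t * cos a - cos (a - t)"
    using 3 a by (simp add: a_def)
  then show ?case using a e by simp
qed auto

lemma degree_cheb: "degree (cheb n) \<le> n"
proof (induction n rule: cheb.induct)
  case (3 n)
  have "degree ([:0, 2:] * cheb (Suc n)) \<le> Suc (Suc n)"
    using degree_mult_le[of "[:0, 2:]" "cheb (Suc n)"] 3(1) by simp
  moreover have "degree (cheb n) \<le> Suc (Suc n)" using 3(2) by simp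
  ultimately show ?case by (simp add: degree_diff_le)
qed auto

lemma fact_double_ge: "(2::real) ^ m * fact m \<le> fact (2 * m)"
proof (induction m)
  case (Suc m)
  have "(2::real) ^ Suc m * fact (Suc m) = 2 * (real m + 1) * (2 ^ m * fact m)"
    by (simp add: algebra_simps)
  also have "\<dots> \<le> (2 * real m + 2) * (2 * real m + 1) * fact (2 * m)"
    using Suc by (intro mult_mono) (auto simp: algebra_simps)
  also have "\<dots> = fact (2 * Suc m)"
    by (simp add: algebra_simps)
  finally show ?case .
qed simp

lemma aux_div: fixes t::real shows "(t/2)^m /\<^sub>R fact m = t^m/(2^m * fact m)"
  by (simp add: power_divide field_simps)

lemma cosh_bound: fixes s :: real shows "(exp s + exp (- s)) / 2 \<le> exp (s^2 / 2)"
proof -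
  define f where "f = (\<lambda>n. if even n then s ^ n /\<^sub>R fact n else 0)"
  have "f sums cosh s" unfolding f_def by (rule cosh_converges)
  hence c: "(\<lambda>m. f (2 * m)) sums cosh s"
    by (subst sums_mono_reindex[where g = "\<lambda>m. 2 * m"])
       (auto simp: f_def strict_mono_def elim!: evenE)
  have e: "(\<lambda>m. (s^2/2) ^ m /\<^sub>R fact m) sums exp (s^2/2)" by (rule exp_converges)
  have le: "f (2 * m) \<le> (s^2/2) ^ m /\<^sub>R fact m" for m
  proof -
    have "f (2 * m) = s ^ (2 * m) / fact (2 * m)" unfolding f_def by (simp add: field_simps)
    also have "\<dots> = (s^2) ^ m / fact (2 * m)" by (simp only: power_mult)
    also have "\<dots> \<le> (s^2) ^ m / (2 ^ m * fact m)"
      by (intro divide_left_mono fact_double_ge) auto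
    also have "\<dots> = (s^2/2) ^ m /\<^sub>R fact m" 
      by (rule aux_div[symmetric])
    finally show ?thesis .
  qed
  have "cosh s \<le> exp (s^2/2)" using sums_le[OF le c e] .
  thus ?thesis by (simp add: cosh_def field_simps)
qed

lemma chernoff:
  fixes j :: nat and m \<sigma> :: real
  assumes "j > 0" "m > 0" "\<sigma> = 1 \<or> \<sigma> = -1"
  shows "(\<Sum>i\<in>{i. i \<le> j \<and> m \<le> \<sigma> * (real j - 2 * real i)}. real (j choose i))
           \<le> 2 ^ j * exp (- (m^2) / (2 * real j))"
proof -
  define s where "s = \<sigma> * m / j"
  define A where "A = {i. i \<le> j \<and> m \<le> \<sigma> * (real j - 2 * real i)}"
  have s2: "s^2 = m^2 / (real j)^2" using assms(3) by (auto simp: s_def power_divide)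
  have "(\<Sum>i\<in>A. real (j choose i)) \<le> (\<Sum>i\<in>A. real (j choose i) * exp (s * (real j - 2 * real i) - m^2 / j))"
  proof (rule sum_mono)
    fix i assume "i \<in> A"
    hence "m \<le> \<sigma> * (real j - 2 * real i)" by (simp add: A_def)
    hence "0 \<le> (m / j) * (\<sigma> * (real j - 2 * real i) - m)" using assms by (intro mult_nonneg_nonneg) auto
    also have "\<dots> = s * (real j - 2 * real i) - m^2 / j" using assms(1) by (simp add: s_def power2_eq_square field_simps)
    finally have "1 \<le> exp (s * (real j - 2 * real i) - m^2 / j)" by simp
    thus "real (j choose i) \<le> real (j choose i) * exp (s * (real j - 2 * real i) - m^2 / j)"
      by (simp add: mult_le_cancel_left1)
  qed
  also have "\<dots> \<le> (\<Sum>i\<le>j. real (j choose i) * exp (s * (real j - 2 * real i) - m^2 / j))"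
    by (rule sum_mono2) (auto simp: A_def)
  also have "\<dots> = (\<Sum>i\<le>j. real (j choose i) * exp (-s) ^ i * exp s ^ (j - i)) * exp (- (m^2 / j))"
    unfolding sum_distrib_right
  proof (rule sum.cong[OF refl])
    fix i assume "i \<in> {..j}"
    hence "s * (real j - 2 * real i) - m^2 / j = real i * (-s) + real (j - i) * s + (- (m^2 / j))"
      by (simp add: of_nat_diff algebra_simps)
    thus "real (j choose i) * exp (s * (real j - 2 * real i) - m^2 / j) = real (j choose i) * exp (-s) ^ i * exp s ^ (j - i) * exp (- (m^2 / j))"
      by (simp only: exp_add exp_of_nat_mult mult.assoc)
  qed
  also have "(\<Sum>i\<le>j. real (j choose i) * exp (-s) ^ i * exp s ^ (j - i)) = (exp (-s) + exp s) ^ j"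
    by (rule binomial_ring[symmetric])
  also have "(exp (-s) + exp s) ^ j * exp (- (m^2 / j)) \<le> (2 * exp (s^2/2)) ^ j * exp (- (m^2 / j))"
    using cosh_bound[of s] by (intro mult_right_mono power_mono) auto
  also have "\<dots> = 2 ^ j * exp (- (m^2) / (2 * real j))"
  proof -
    have "(2 * exp (s^2/2)) ^ j * exp (- (m^2 / j)) = 2 ^ j * exp (real j * (s^2/2) + - (m^2 / j))"
      by (simp only: power_mult_distrib exp_of_nat_mult exp_add mult.assoc)
    also have "real j * (s^2/2) + - (m^2 / j) = - (m^2) / (2 * real j)"
      unfolding s2 using assms(1) by (simp add: power2_eq_square field_simps)
    finally show ?thesis .
  qed
  finally show ?thesis unfolding A_def .
qed


lemma cos_power:
  "(cos \<phi>) ^ j = (\<Sum>i\<le>j. real (j choose i) * cos ((real j - 2 * real i) * \<phi>)) / 2 ^ j"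
proof -
  have c: "complex_of_real (2 * cos \<phi>) = cis \<phi> + cis (- \<phi>)"
    by (simp add: complex_eq_iff)
  have "(2 * cos \<phi>) ^ j = Re (complex_of_real ((2 * cos \<phi>) ^ j))" by simp
  also have "\<dots> = Re ((cis \<phi> + cis (- \<phi>)) ^ j)" by (simp only: of_real_power c)
  also have "\<dots> = (\<Sum>i\<le>j. real (j choose i) * cos ((real j - 2 * real i) * \<phi>))"
  proof -
    have "(cis \<phi> + cis (- \<phi>)) ^ j = (\<Sum>i\<le>j. of_nat (j choose i) * cis \<phi> ^ i * cis (- \<phi>) ^ (j - i))"
      by (rule binomial_ring)
    also have "\<dots> = (\<Sum>i\<le>j. of_nat (j choose i) * cis ((2 * real i - real j) * \<phi>))"
    proof (rule sum.cong[OF refl])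
      fix i assume "i \<in> {..j}"
      hence "real i * \<phi> + real (j - i) * - \<phi> = (2 * real i - real j) * \<phi>"
        by (simp add: of_nat_diff algebra_simps)
      moreover have "cis \<phi> ^ i * cis (- \<phi>) ^ (j - i) = cis (real i * \<phi> + real (j - i) * - \<phi>)"
        by (simp only: DeMoivre cis_mult)
      ultimately show "of_nat (j choose i) * cis \<phi> ^ i * cis (- \<phi>) ^ (j - i) = of_nat (j choose i) * cis ((2 * real i - real j) * \<phi>)"
        by (simp add: mult.assoc)
    qed
    finally have "Re ((cis \<phi> + cis (- \<phi>)) ^ j) = (\<Sum>i\<le>j. real (j choose i) * cos ((2 * real i - real j) * \<phi>))"
      by simp
    also have "\<dots> = (\<Sum>i\<le>j. real (j choose i) * cos ((real j - 2 * real i) * \<phi>))"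
    proof (rule sum.cong[OF refl])
      fix i
      have "(2 * real i - real j) * \<phi> = - ((real j - 2 * real i) * \<phi>)" by (simp add: algebra_simps)
      then show "real (j choose i) * cos ((2 * real i - real j) * \<phi>) = real (j choose i) * cos ((real j - 2 * real i) * \<phi>)"
        by (simp only: cos_minus)
    qed
    finally show ?thesis .
  qed
  finally have "(2 * cos \<phi>) ^ j = (\<Sum>i\<le>j. real (j choose i) * cos ((real j - 2 * real i) * \<phi>))" .
  thus ?thesis by (simp add: power_mult_distrib field_simps)
qed


lemma trunc:
  fixes j d :: nat and \<theta> :: real
  defines "S \<equiv> {i. i \<le> j \<and> \<bar>int j - 2 * int i\<bar> \<le> int d}"
  assumes "j > 0"
  shows "\<bar>(\<Sum>i\<in>S. real (j choose i) * cos (real (2 * nat \<bar>int j - 2 * int i\<bar>) * \<theta>)) / 2 ^ j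
            - (cos (2 * \<theta>)) ^ j\<bar> \<le> 2 * exp (- ((real d + 1)^2) / (2 * real j))"
proof -
  define g where "g = (\<lambda>i. real (j choose i) * cos ((real j - 2 * real i) * (2 * \<theta>)))"
  have SS: "S \<subseteq> {..j}" by (auto simp: S_def)
  have eqS: "real (j choose i) * cos (real (2 * nat \<bar>int j - 2 * int i\<bar>) * \<theta>) = g i" for i
  proof -
    have r: "real (2 * nat \<bar>int j - 2 * int i\<bar>) = 2 * \<bar>real j - 2 * real i\<bar>"
    proof -
      have "real (2 * nat \<bar>int j - 2 * int i\<bar>) = 2 * real_of_int \<bar>int j - 2 * int i\<bar>" by simp
      also have "real_of_int \<bar>int j - 2 * int i\<bar> = \<bar>real j - 2 * real i\<bar>" by simp
      finally show ?thesis .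
    qed
    show ?thesis
    proof (cases "real j - 2 * real i \<ge> 0")
      case True
      then show ?thesis unfolding g_def r by (simp add: algebra_simps)
    next
      case False
      then have "cos (2 * \<bar>real j - 2 * real i\<bar> * \<theta>) = cos (- ((real j - 2 * real i) * (2 * \<theta>)))"
        by (simp add: algebra_simps)
      then show ?thesis unfolding g_def r by (simp only: cos_minus)
    qed
  qed
  have cp: "(cos (2 * \<theta>)) ^ j = (\<Sum>i\<le>j. g i) / 2 ^ j" unfolding g_def by (rule cos_power)
  have split: "(\<Sum>i\<le>j. g i) = (\<Sum>i\<in>S. g i) + (\<Sum>i\<in>{..j} - S. g i)"
    using sum.subset_diff[OF SS, of g] by simp
  have diff: "(\<Sum>i\<in>S. real (j choose i) * cos (real (2 * nat \<bar>int j - 2 * int i\<bar>) * \<theta>)) / 2 ^ j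
            - (cos (2 * \<theta>)) ^ j = - (\<Sum>i\<in>{..j} - S. g i) / 2 ^ j"
    unfolding cp split eqS by (simp add: field_simps)
  define A1 where "A1 = {i. i \<le> j \<and> real d + 1 \<le> 1 * (real j - 2 * real i)}"
  define A2 where "A2 = {i. i \<le> j \<and> real d + 1 \<le> (-1) * (real j - 2 * real i)}"
  have fin: "finite A1" "finite A2" by (auto simp: A1_def A2_def)
  have sub: "{..j} - S \<subseteq> A1 \<union> A2" by (auto simp: S_def A1_def A2_def)
  have "\<bar>\<Sum>i\<in>{..j} - S. g i\<bar> \<le> (\<Sum>i\<in>{..j} - S. real (j choose i))"
    by (rule order.trans[OF sum_abs]) (auto simp: g_def abs_mult intro!: sum_mono mult_left_le)
  also have "\<dots> \<le> (\<Sum>i\<in>A1 \<union> A2. real (j choose i))"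
    by (rule sum_mono2) (use fin sub in auto)
  also have "\<dots> \<le> (\<Sum>i\<in>A1. real (j choose i)) + (\<Sum>i\<in>A2. real (j choose i))"
  proof -
    have "(\<Sum>i\<in>A1 \<union> A2. real (j choose i)) + (\<Sum>i\<in>A1 \<inter> A2. real (j choose i)) = (\<Sum>i\<in>A1. real (j choose i)) + (\<Sum>i\<in>A2. real (j choose i))"
      by (rule sum.union_inter) (use fin in auto)
    moreover have "0 \<le> (\<Sum>i\<in>A1 \<inter> A2. real (j choose i))" by (rule sum_nonneg) auto
    ultimately show ?thesis by linarith
  qed
  also have "\<dots> \<le> 2 ^ j * exp (- ((real d + 1)^2) / (2 * real j)) + 2 ^ j * exp (- ((real d + 1)^2) / (2 * real j))"
    unfolding A1_def A2_def using assms(2)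
    by (intro add_mono chernoff) auto
  finally have "\<bar>\<Sum>i\<in>{..j} - S. g i\<bar> \<le> 2 ^ j * (2 * exp (- ((real d + 1)^2) / (2 * real j)))" by simp
  thus ?thesis unfolding diff by (simp add: field_simps)
qed


lemma exp_partial_le:
  fixes lam :: real assumes "0 \<le> lam"
  shows "(\<Sum>j<B. lam ^ j / fact j) \<le> exp lam"
proof -
  obtain t where "exp lam = (\<Sum>m<B. lam ^ m / fact m) + exp t / fact B * lam ^ B"
    using Maclaurin_exp_le[of lam B] by blast
  moreover have "0 \<le> exp t / fact B * lam ^ B" using assms by simp
  ultimately show ?thesis by linarith
qed

lemma approx_core:
  fixes lam y e :: real and B :: nat and Rv :: "nat \<Rightarrow> real"
  assumes lam: "0 \<le> lam" and y: "\<bar>y\<bar> \<le> 1" and e: "0 \<le> e"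
    and R: "\<And>j. j < B \<Longrightarrow> \<bar>Rv j - y ^ j\<bar> \<le> e / 2"
    and tail: "lam ^ B / fact B \<le> e / 2"
  shows "\<bar>exp (- lam) * (\<Sum>j<B. (-lam) ^ j / fact j * Rv j) - exp (- lam) * exp (- lam * y)\<bar> \<le> e"
proof -
  obtain t where t: "\<bar>t\<bar> \<le> \<bar>- lam * y\<bar>"
      "exp (- lam * y) = (\<Sum>m<B. (- lam * y) ^ m / fact m) + exp t / fact B * (- lam * y) ^ B"
    using Maclaurin_exp_le[of "- lam * y" B] by blast
  have "\<bar>- lam * y\<bar> \<le> lam" using lam y by (simp add: abs_mult mult_left_le)
  hence tl: "exp t \<le> exp lam" using t(1) by simp
  define rem where "rem = exp t / fact B * (- lam * y) ^ B"
  have sumeq: "(\<Sum>m<B. (- lam * y) ^ m / fact m) = (\<Sum>j<B. (-lam) ^ j / fact j * y ^ j)"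
  proof (rule sum.cong[OF refl])
    fix m
    have "(- lam * y) ^ m = (- lam) ^ m * y ^ m" by (rule power_mult_distrib)
    thus "(- lam * y) ^ m / fact m = (- lam) ^ m / fact m * y ^ m" by simp
  qed
  have eq: "exp (- lam) * (\<Sum>j<B. (-lam) ^ j / fact j * Rv j) - exp (- lam) * exp (- lam * y)
      = exp (- lam) * ((\<Sum>j<B. (-lam) ^ j / fact j * (Rv j - y ^ j)) - rem)"
  proof -
    have d: "(\<Sum>j<B. (-lam) ^ j / fact j * (Rv j - y ^ j)) = (\<Sum>j<B. (-lam) ^ j / fact j * Rv j) - (\<Sum>j<B. (-lam) ^ j / fact j * y ^ j)"
      by (simp only: right_diff_distrib sum_subtractf)
    have r: "\<And>a X Y r :: real. a * X - a * (Y + r) = a * ((X - Y) - r)" by (simp add: algebra_simps)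
    show ?thesis unfolding t(2) sumeq rem_def[symmetric] d by (rule r)
  qed
  have s1: "\<bar>\<Sum>j<B. (-lam) ^ j / fact j * (Rv j - y ^ j)\<bar> \<le> exp lam * (e / 2)"
  proof -
    have "\<bar>\<Sum>j<B. (-lam) ^ j / fact j * (Rv j - y ^ j)\<bar> \<le> (\<Sum>j<B. lam ^ j / fact j * (e / 2))"
    proof (rule order.trans[OF sum_abs], rule sum_mono)
      fix j assume "j \<in> {..<B}"
      hence "\<bar>Rv j - y ^ j\<bar> \<le> e / 2" using R by simp
      hence "lam ^ j / fact j * \<bar>Rv j - y ^ j\<bar> \<le> lam ^ j / fact j * (e / 2)"
        using lam by (intro mult_left_mono) auto
      thus "\<bar>(-lam) ^ j / fact j * (Rv j - y ^ j)\<bar> \<le> lam ^ j / fact j * (e / 2)"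
        using lam by (simp add: abs_mult power_abs)
    qed
    also have "\<dots> = (\<Sum>j<B. lam ^ j / fact j) * (e / 2)" by (simp add: sum_distrib_right)
    also have "\<dots> \<le> exp lam * (e / 2)"
      using exp_partial_le[OF lam] e by (intro mult_right_mono) auto
    finally show ?thesis .
  qed
  have s2: "\<bar>rem\<bar> \<le> exp lam * (lam ^ B / fact B)"
  proof -
    have "\<bar>(- lam * y) ^ B\<bar> \<le> lam ^ B"
      unfolding power_abs using \<open>\<bar>- lam * y\<bar> \<le> lam\<close> by (intro power_mono) auto
    hence "\<bar>rem\<bar> \<le> exp lam / fact B * lam ^ B"
      unfolding rem_def abs_mult using tl
      by (intro mult_mono) (auto intro: divide_right_mono)
    thus ?thesis by simp
  qed
  have "\<bar>exp (- lam) * (\<Sum>j<B. (-lam) ^ j / fact j * Rv j) - exp (- lam) * exp (- lam * y)\<bar>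
      \<le> exp (- lam) * (exp lam * (e / 2) + exp lam * (lam ^ B / fact B))"
  proof -
    have "\<bar>(\<Sum>j<B. (-lam) ^ j / fact j * (Rv j - y ^ j)) - rem\<bar> \<le> exp lam * (e / 2) + exp lam * (lam ^ B / fact B)"
      using s1 s2 by (rule order.trans[OF abs_triangle_ineq4 add_mono])
    thus ?thesis unfolding eq abs_mult by (simp add: mult_left_mono)
  qed
  also have "\<dots> = e / 2 + lam ^ B / fact B"
    by (simp add: algebra_simps flip: exp_add)
  also have "\<dots> \<le> e" using tail by linarith
  finally show ?thesis .
qed


lemma tail_bound:
  fixes lam \<epsilon> :: real and B :: nat
  assumes lam: "0 \<le> lam" and B: "B > 0" and le1: "lam * (exp 1)^2 \<le> real B"
    and le2: "ln (2 / \<epsilon>) \<le> real B" and eps: "0 < \<epsilon>"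
  shows "lam ^ B / fact B \<le> \<epsilon> / 2"
proof -
  have Bp: "real B > 0" using B by simp
  have f: "real B ^ B / fact B \<le> exp (real B)"
  proof -
    have "real B ^ B / fact B \<le> (\<Sum>j<Suc B. real B ^ j / fact j)"
      by (rule member_le_sum) auto
    also have "\<dots> \<le> exp (real B)" by (rule exp_partial_le) simp
    finally show ?thesis .
  qed
  have "lam ^ B / fact B = (lam / real B) ^ B * (real B ^ B / fact B)"
    using Bp by (simp add: power_divide field_simps)
  also have "\<dots> \<le> (lam / real B) ^ B * exp (real B)"
    using f lam Bp by (intro mult_left_mono) auto
  also have "\<dots> = (lam * exp 1 / real B) ^ B"
    by (simp add: power_mult_distrib power_divide exp_of_nat_mult[symmetric] field_simps)
  also have "\<dots> \<le> (exp (-1)) ^ B"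
  proof (rule power_mono)
    have "lam * exp 1 * exp 1 \<le> real B" using le1 by (simp add: power2_eq_square mult.assoc)
    hence "lam * exp 1 \<le> real B / exp 1" by (simp add: field_simps)
    hence "lam * exp 1 / real B \<le> 1 / exp 1" using Bp by (simp add: field_simps)
    thus "lam * exp 1 / real B \<le> exp (-1)" by (simp add: exp_minus field_simps)
    show "0 \<le> lam * exp 1 / real B" using lam Bp by simp
  qed
  also have "\<dots> = exp (- real B)" by (simp add: exp_of_nat_mult[symmetric])
  also have "\<dots> \<le> exp (- ln (2 / \<epsilon>))" using le2 by simp
  also have "\<dots> = \<epsilon> / 2" using eps by (simp add: exp_minus)
  finally show ?thesis .
qed

lemma cheb_bound:
  fixes \<epsilon> L :: real and B j d :: nat
  assumes eps: "0 < \<epsilon>" and L: "L = ln (4 / \<epsilon>)" and j: "0 < j" "j \<le> B"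
    and dL: "2 * real B * L \<le> (real d + 1)^2" and L0: "0 \<le> L"
  shows "2 * exp (- ((real d + 1)^2) / (2 * real j)) \<le> \<epsilon> / 2"
proof -
  have jp: "real j > 0" using j by simp
  have "L * (2 * real j) \<le> 2 * real B * L" using j L0 by (simp add: mult_left_mono algebra_simps)
  hence "L * (2 * real j) \<le> (real d + 1)^2" using dL by linarith
  hence "L \<le> (real d + 1)^2 / (2 * real j)" using jp by (simp add: field_simps)
  hence "exp (- ((real d + 1)^2) / (2 * real j)) \<le> exp (- L)" by simp
  also have "exp (- L) = \<epsilon> / 4" using eps by (simp add: L exp_minus)
  finally show ?thesis by simp
qed


theorem lemma9:
  fixes k \<epsilon> :: real
  assumes "0 < \<epsilon>" and "\<epsilon> < 1"
  defines "n \<equiv> nat \<lceil>sqrt (8 * real_of_int \<lceil>max (ln (2 / \<epsilon>)) (k^2 * (exp 1)^2 / 2)\<rceil> * ln (4 / \<epsilon>))\<rceil>"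
  shows "\<exists>p :: real poly. degree p \<le> n \<and>
           (\<forall>x \<in> {-1..1}. \<bar>poly p x - exp (- ((k * x)^2))\<bar> \<le> \<epsilon>)"
proof -
  define M where "M = max (ln (2 / \<epsilon>)) (k^2 * (exp 1)^2 / 2)"
  define L where "L = ln (4 / \<epsilon>)"
  define B where "B = nat \<lceil>M\<rceil>"
  define lam where "lam = k^2 / 2"
  define d where "d = n div 2"
  have eps: "0 < \<epsilon>" using assms by simp
  have ln2: "ln (2 / \<epsilon>) > 0" using assms by simp
  have L0: "L \<ge> 0" unfolding L_def using assms by simp
  have MB: "M \<le> real B" unfolding B_def by linarith
  have Bint: "real B = real_of_int \<lceil>M\<rceil>" unfolding B_def using ln2 M_def
    by (simp add: max_def)
  have Bpos: "B > 0" using MB ln2 unfolding M_def by (auto simp: max_def split: if_splits)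
  have lam0: "0 \<le> lam" unfolding lam_def by simp
  have n_eq: "n = nat \<lceil>sqrt (8 * real B * L)\<rceil>" unfolding n_def Bint M_def L_def ..
  have dL: "2 * real B * L \<le> (real d + 1)^2"
  proof -
    have "sqrt (8 * real B * L) \<le> real n" unfolding n_eq by linarith
    also have "real n < 2 * (real d + 1)"
    proof -
      have "n < 2 * (d + 1)" unfolding d_def by presburger
      hence "real n < real (2 * (d + 1))" by (simp only: of_nat_less_iff)
      thus ?thesis by simp
    qed
    finally have "sqrt (8 * real B * L) \<le> 2 * (real d + 1)" by simp
    hence "(sqrt (8 * real B * L))^2 \<le> (2 * (real d + 1))^2"
      using L0 by (intro power_mono) auto
    moreover have "(sqrt (8 * real B * L))^2 = 8 * real B * L" using L0 by simp
    ultimately show ?thesis by (simp add: power2_eq_square algebra_simps)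
  qed
  define S where "S = (\<lambda>j. {i. i \<le> j \<and> \<bar>int j - 2 * int i\<bar> \<le> int d})"
  define R where "R = (\<lambda>j. smult (1 / 2 ^ j) (\<Sum>i\<in>S j. smult (real (j choose i)) (cheb (2 * nat \<bar>int j - 2 * int i\<bar>))))"
  define p where "p = smult (exp (- lam)) (\<Sum>j<B. smult ((- lam) ^ j / fact j) (R j))"
  have finS: "finite (S j)" for j by (auto simp: S_def)
  have degR: "degree (R j) \<le> 2 * d" for j
  proof -
    have "degree (\<Sum>i\<in>S j. smult (real (j choose i)) (cheb (2 * nat \<bar>int j - 2 * int i\<bar>))) \<le> 2 * d"
    proof (rule degree_sum_le[OF finS])
      fix i assume "i \<in> S j"
      hence "nat \<bar>int j - 2 * int i\<bar> \<le> d" by (auto simp: S_def)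
      thus "degree (smult (real (j choose i)) (cheb (2 * nat \<bar>int j - 2 * int i\<bar>))) \<le> 2 * d"
        using degree_smult_le degree_cheb order.trans by (metis mult_le_mono2)
    qed
    thus ?thesis unfolding R_def using degree_smult_le order.trans by blast
  qed
  have degp: "degree p \<le> n"
  proof -
    have "degree (\<Sum>j<B. smult ((- lam) ^ j / fact j) (R j)) \<le> 2 * d"
    proof (rule degree_sum_le)
      fix j show "degree (smult ((- lam) ^ j / fact j) (R j)) \<le> 2 * d"
        by (rule order.trans[OF degree_smult_le degR])
    qed simp
    hence "degree p \<le> 2 * d" unfolding p_def using degree_smult_le order.trans by blast
    also have "2 * d \<le> n" unfolding d_def by simp
    finally show ?thesis .
  qed
  have approx: "\<bar>poly p x - exp (- ((k * x)^2))\<bar> \<le> \<epsilon>" if x: "x \<in> {-1..1}" for x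
  proof -
    define \<theta> where "\<theta> = arccos x"
    have cx: "cos \<theta> = x" unfolding \<theta>_def using x by simp
    define y where "y = cos (2 * \<theta>)"
    have y1: "\<bar>y\<bar> \<le> 1" unfolding y_def by simp
    have yx: "y = 2 * x^2 - 1" unfolding y_def cos_double_cos cx ..
    have polyR: "poly (R j) x = (\<Sum>i\<in>S j. real (j choose i) * cos (real (2 * nat \<bar>int j - 2 * int i\<bar>) * \<theta>)) / 2 ^ j" for j
      unfolding R_def poly_smult poly_sum cx[symmetric] cheb_cos by simp
    have polyp: "poly p x = exp (- lam) * (\<Sum>j<B. (- lam) ^ j / fact j * poly (R j) x)"
      unfolding p_def poly_smult poly_sum ..
    have expeq: "exp (- ((k * x)^2)) = exp (- lam) * exp (- lam * y)"
    proof -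
      have "- ((k * x)^2) = - lam + - lam * y" unfolding yx lam_def by (simp add: power2_eq_square algebra_simps)
      hence "exp (- ((k * x)^2)) = exp (- lam + - lam * y)" by (simp only:)
      thus ?thesis by (simp only: exp_add)
    qed
    have Rb: "\<bar>poly (R j) x - y ^ j\<bar> \<le> \<epsilon> / 2" if j: "j < B" for j
    proof (cases "j = 0")
      case True
      have "S 0 = {0}" by (auto simp: S_def)
      then show ?thesis using True eps by (simp add: polyR)
    next
      case False
      have "\<bar>poly (R j) x - y ^ j\<bar> \<le> 2 * exp (- ((real d + 1)^2) / (2 * real j))"
        unfolding polyR y_def S_def using trunc[where j=j and d=d and \<theta>=\<theta>] False by simp
      also have "\<dots> \<le> \<epsilon> / 2"
        by (rule cheb_bound[OF eps L_def _ _ dL L0]) (use False j in auto)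
      finally show ?thesis .
    qed
    have tail: "lam ^ B / fact B \<le> \<epsilon> / 2"
    proof (rule tail_bound[OF lam0 Bpos _ _ eps])
      show "lam * (exp 1)^2 \<le> real B" using MB unfolding M_def lam_def by simp
      show "ln (2 / \<epsilon>) \<le> real B" using MB unfolding M_def by simp
    qed
    show ?thesis
      unfolding polyp expeq
      by (rule approx_core[OF lam0 y1 _ Rb tail]) (use eps in auto)
  qed
  show ?thesis using degp approx by blast
qed

end
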